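(* Let $A$ be an arborescence. The poset consisting of the (arc sets of) nonempty directed paths of $A$, ordered by inclusion, has order dimension at most $3$.
   Context: An arborescence is a directed tree with a root $r$ such that every node is reachable from $r$ by a directed path. The order dimension of a poset $P$ is the least number of linear orders on its ground set whose intersection is the order of $P$. *)

theory Defs
  imports Main
begin

definition adj :: "('a \<times> 'a) set \<Rightarrow> 'a \<Rightarrow> 'a \<Rightarrow> bool" where
  "adj E u v \<longleftrightarrow> (u, v) \<in> E \<or> (v, u) \<in> E"

definition undirected_cycle :: "('a \<times> 'a) set \<Rightarrow> 'a list \<Rightarrow> bool" where
  "undirected_cycle E vs \<longleftrightarrow> length vs \<ge> 3 \<and> distinct vs \<and>
     (\<forall>i. Suc i < length vs \<longrightarrow> adj E (vs ! i) (vs ! Suc i)) \<and>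
     adj E (last vs) (hd vs)"

definition directed_tree :: "'a set \<Rightarrow> ('a \<times> 'a) set \<Rightarrow> bool" where
  "directed_tree V E \<longleftrightarrow> finite V \<and> V \<noteq> {} \<and> E \<subseteq> V \<times> V \<and>
     (\<forall>v. (v, v) \<notin> E) \<and> (\<forall>u v. (u, v) \<in> E \<longrightarrow> (v, u) \<notin> E) \<and>
     (\<forall>u\<in>V. \<forall>v\<in>V. (u, v) \<in> {(x, y). adj E x y}\<^sup>*) \<and>
     (\<nexists>vs. undirected_cycle E vs)"

definition arborescence :: "'a set \<Rightarrow> ('a \<times> 'a) set \<Rightarrow> 'a \<Rightarrow> bool" where
  "arborescence V E r \<longleftrightarrow> directed_tree V E \<and> r \<in> V \<and> (\<forall>v\<in>V. (r, v) \<in> E\<^sup>*)"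

definition dipath :: "('a \<times> 'a) set \<Rightarrow> 'a list \<Rightarrow> bool" where
  "dipath E vs \<longleftrightarrow> vs \<noteq> [] \<and> distinct vs \<and>
     (\<forall>i. Suc i < length vs \<longrightarrow> (vs ! i, vs ! Suc i) \<in> E)"

definition path_arcs :: "'a list \<Rightarrow> ('a \<times> 'a) set" where
  "path_arcs vs = set (zip vs (tl vs))"

definition nonempty_path_arcsets :: "('a \<times> 'a) set \<Rightarrow> ('a \<times> 'a) set set" where
  "nonempty_path_arcsets E = {path_arcs vs | vs. dipath E vs \<and> length vs \<ge> 2}"

definition realizer :: "'b set \<Rightarrow> ('b \<times> 'b) set \<Rightarrow> nat \<Rightarrow> (nat \<Rightarrow> ('b \<times> 'b) set) \<Rightarrow> bool" where
  "realizer X R k L \<longleftrightarrow> (\<forall>i<k. linear_order_on X (L i)) \<and>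
     (\<forall>x\<in>X. \<forall>y\<in>X. (x, y) \<in> R \<longleftrightarrow> (\<forall>i<k. (x, y) \<in> L i))"

definition order_dimension :: "'b set \<Rightarrow> ('b \<times> 'b) set \<Rightarrow> nat" where
  "order_dimension X R = (LEAST k. \<exists>L. realizer X R k L)"

definition inclusion_order :: "'b set set \<Rightarrow> ('b set \<times> 'b set) set" where
  "inclusion_order X = {(p, q). p \<in> X \<and> q \<in> X \<and> p \<subseteq> q}"

end

theory Submission
  imports Defs "HOL-Library.List_Lexorder" "HOL-Library.Product_Lexorder"
begin


lemma dipath_conv: "dipath E vs \<longleftrightarrow> vs \<noteq> [] \<and> distinct vs \<and> successively (\<lambda>x y. (x,y)\<in>E) vs"
  by (simp add: dipath_def successively_conv_nth)

lemma ucycle_conv: "undirected_cycle E vs \<longleftrightarrow> length vs \<ge> 3 \<and> distinct vs \<and>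
   successively (adj E) vs \<and> adj E (last vs) (hd vs)"
  by (simp add: undirected_cycle_def successively_conv_nth)

lemma arbD:
  assumes "arborescence V E r"
  shows "finite V" "E \<subseteq> V \<times> V" "(v,v) \<notin> E" "(u,v) \<in> E \<Longrightarrow> (v,u) \<notin> E"
    "\<not> undirected_cycle E vs" "r \<in> V" "v \<in> V \<Longrightarrow> (r,v) \<in> E\<^sup>*"
  using assms unfolding arborescence_def directed_tree_def by auto

lemma no_dcycle:
  assumes arb: "arborescence V E r" and W: "dipath E W" and e: "(last W, hd W) \<in> E"
  shows False
proof -
  consider a where "W = [a]" | a b where "W = [a,b]" | a b c rest where "W = a # b # c # rest"
    using W unfolding dipath_def by (metis list.exhaust)
  then show False
  proof cases
    case 1 then show ?thesis using e arbD(3)[OF arb] by auto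
  next
    case 2 then show ?thesis using e W arbD(4)[OF arb] by (auto simp: dipath_conv)
  next
    case 3
    have "undirected_cycle E W"
      unfolding ucycle_conv
    proof (intro conjI)
      show "3 \<le> length W" using 3 by simp
      show "distinct W" using W by (simp add: dipath_conv)
      show "successively (adj E) W" using W unfolding dipath_conv
        by (auto elim: successively_mono simp: adj_def)
      show "adj E (last W) (hd W)" using e by (simp add: adj_def)
    qed
    then show ?thesis using arbD(5)[OF arb] by blast
  qed
qed

lemma dipath_prefix: "dipath E (xs @ ys) \<Longrightarrow> xs \<noteq> [] \<Longrightarrow> dipath E xs"
  by (auto simp: dipath_conv successively_append_iff)

lemma dipath_suffix: "dipath E (xs @ ys) \<Longrightarrow> ys \<noteq> [] \<Longrightarrow> dipath E ys"
  by (auto simp: dipath_conv successively_append_iff)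

lemma distinct_hd_last: "distinct xs \<Longrightarrow> xs \<noteq> [] \<Longrightarrow> hd xs = last xs \<Longrightarrow> xs = [hd xs]"
  by (cases xs) (auto split: if_splits)

lemma root_path_exists:
  assumes arb: "arborescence V E r" and v: "v \<in> V"
  shows "\<exists>P. dipath E P \<and> hd P = r \<and> last P = v"
proof -
  have "(r, v) \<in> E\<^sup>*" using arbD(7)[OF arb v] .
  then show ?thesis
  proof (induction rule: rtrancl_induct)
    case base
    then show ?case by (intro exI[of _ "[r]"]) (simp add: dipath_def)
  next
    case (step y z)
    then obtain P where P: "dipath E P" "hd P = r" "last P = y" by blast
    show ?case
    proof (cases "z \<in> set P")
      case True
      then obtain A B where AB: "P = A @ z # B" by (meson split_list)
      have "dipath E (A @ [z])" using P(1) AB dipath_prefix[of E "A @ [z]" B] by simp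
      moreover have "hd (A @ [z]) = r" using P(2) AB by (cases A) auto
      ultimately show ?thesis by (intro exI[of _ "A @ [z]"]) simp
    next
      case False
      have "dipath E (P @ [z])" using P step(2) False
        by (auto simp: dipath_conv successively_append_iff)
      moreover have "hd (P @ [z]) = r" using P by (auto simp: dipath_def)
      ultimately show ?thesis by (intro exI[of _ "P @ [z]"]) simp
    qed
  qed
qed

lemma root_path_unique:
  assumes arb: "arborescence V E r"
  shows "dipath E P \<Longrightarrow> hd P = r \<Longrightarrow> dipath E P' \<Longrightarrow> hd P' = r \<Longrightarrow> last P = last P' \<Longrightarrow> P = P'"
proof (induction "length P + length P'" arbitrary: P P' rule: less_induct)
  case less
  show ?case
  proof (cases "length P = 1 \<or> length P' = 1")
    case True
    then show ?thesis
    proof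
      assume "length P = 1"
      then have "P = [r]" using less.prems(2) by (cases P) auto
      then have "P' = [r]" using less.prems distinct_hd_last[of P'] by (auto simp: dipath_def)
      then show ?thesis using \<open>P = [r]\<close> by simp
    next
      assume "length P' = 1"
      then have "P' = [r]" using less.prems(4) by (cases P') auto
      then have "P = [r]" using less.prems distinct_hd_last[of P] by (auto simp: dipath_def)
      then show ?thesis using \<open>P' = [r]\<close> by simp
    qed
  next
    case False
    obtain Pb v where Pv: "P = Pb @ [v]" using less.prems(1) by (metis dipath_def rev_exhaust)
    obtain Pb' v' where Pv': "P' = Pb' @ [v']" using less.prems(3) by (metis dipath_def rev_exhaust)
    have vv: "v' = v" using less.prems(5) Pv Pv' by simp
    have nb: "Pb \<noteq> []" "Pb' \<noteq> []" using False Pv Pv' by auto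
    have dPb: "dipath E Pb" "dipath E Pb'" using less.prems(1,3) Pv Pv' nb dipath_prefix by blast+
    have hPb: "hd Pb = r" "hd Pb' = r" using less.prems(2,4) Pv Pv' nb by auto
    have ex: "(last Pb, v) \<in> E" "(last Pb', v) \<in> E"
      using less.prems(1,3) Pv Pv' vv nb by (auto simp: dipath_conv successively_append_iff)
    show ?thesis
    proof (cases "last Pb = last Pb'")
      case True
      have "Pb = Pb'" using less.hyps[of Pb Pb'] Pv Pv' dPb hPb True by simp
      then show ?thesis using Pv Pv' vv by simp
    next
      case False
      have "\<exists>u\<in>set Pb. u \<in> set Pb'" using hPb nb by (metis hd_in_set)
      then obtain A1 w A where S: "Pb = A1 @ w # A" "w \<in> set Pb'" "\<forall>z\<in>set A. z \<notin> set Pb'"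
        using split_list_last_prop[of Pb "\<lambda>u. u \<in> set Pb'"] by blast
      obtain A1' A' where S': "Pb' = A1' @ w # A'" using S(2) by (meson split_list)
      have dP: "distinct (A1 @ w # A @ [v])" using less.prems(1) Pv S by (simp add: dipath_def)
      have dP': "distinct (A1' @ w # A' @ [v])" using less.prems(3) Pv' vv S' by (simp add: dipath_def)
      have sw: "successively (\<lambda>x y. (x,y)\<in>E) (w # A @ [v])"
        using less.prems(1) Pv S by (auto simp: dipath_conv successively_append_iff)
      have sw': "successively (\<lambda>x y. (x,y)\<in>E) (w # A' @ [v])"
        using less.prems(3) Pv' vv S' by (auto simp: dipath_conv successively_append_iff)
      define Cy where "Cy = w # A @ v # rev A'"
      have walk: "Cy @ [w] = (w # A @ [v]) @ rev (w # A')"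
        by (simp add: Cy_def)
      have sa: "successively (adj E) (w # A @ [v])"
        using sw by (auto elim: successively_mono simp: adj_def)
      have sb0: "successively (adj E) (w # A' @ [v])"
        using sw' by (auto elim: successively_mono simp: adj_def)
      have sb: "successively (adj E) (rev (w # A' @ [v]))"
        unfolding successively_rev using sb0 by (rule successively_mono) (auto simp: adj_def)
      define T where "T = rev A' @ [w]"
      have rv: "rev (w # A' @ [v]) = v # T" by (simp add: T_def)
      have sT: "successively (adj E) (v # T)" using sb rv by simp
      have sa2: "successively (adj E) (w # A)" "adj E (last (w # A)) v"
        using sa successively_append_iff[of "adj E" "w # A" "[v]"] by auto
      have "successively (adj E) ((w # A) @ (v # T))"
        unfolding successively_append_iff using sa2 sT by simp
      moreover have "Cy @ [w] = (w # A) @ (v # T)" by (simp add: Cy_def T_def)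
      ultimately have "successively (adj E) (Cy @ [w])" by simp
      moreover have "Cy \<noteq> []" by (simp add: Cy_def)
      ultimately have sC: "successively (adj E) Cy" and lC: "adj E (last Cy) w"
        using successively_append_iff[of "adj E" Cy "[w]"] by auto
      have "A \<noteq> [] \<or> A' \<noteq> []"
      proof (rule ccontr)
        assume "\<not> (A \<noteq> [] \<or> A' \<noteq> [])"
        then have "last Pb = w" "last Pb' = w" using S S' by auto
        then show False using False by simp
      qed
      then have len: "length Cy \<ge> 3" by (auto simp: Cy_def Suc_le_eq)
      have dC: "distinct Cy"
      proof -
        have "set A \<inter> set A' = {}" using S(3) S' by auto
        moreover have "w \<notin> set A'" "v \<notin> set A'" "distinct A'" using dP' by auto
        ultimately show ?thesis using dP by (auto simp: Cy_def)
      qed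
      have "undirected_cycle E Cy"
        unfolding ucycle_conv using len dC sC lC by (simp add: Cy_def)
      then show ?thesis using arbD(5)[OF arb] by blast
    qed
  qed
qed


lemma dipath_set_V:
  assumes arb: "arborescence V E r" and d: "dipath E vs" and h: "hd vs \<in> V"
  shows "set vs \<subseteq> V"
proof
  fix x assume "x \<in> set vs"
  then obtain i where i: "i < length vs" "x = vs ! i" by (metis in_set_conv_nth)
  show "x \<in> V"
  proof (cases i)
    case 0 then show ?thesis using h i d by (simp add: hd_conv_nth dipath_def)
  next
    case (Suc j)
    then have "(vs ! j, vs ! Suc j) \<in> E" using d i by (simp add: dipath_def)
    then show ?thesis using arbD(2)[OF arb] i Suc by auto
  qed
qed

lemma last_in_V:
  assumes arb: "arborescence V E r" and d: "dipath E vs" and l: "2 \<le> length vs"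
  shows "last vs \<in> V"
proof -
  have "(vs ! (length vs - 2), vs ! Suc (length vs - 2)) \<in> E" using d l by (simp add: dipath_def)
  moreover have "Suc (length vs - 2) = length vs - 1" using l by simp
  moreover have "last vs = vs ! (length vs - 1)" using l by (intro last_conv_nth) auto
  ultimately have "(vs ! (length vs - 2), last vs) \<in> E" by simp
  then show ?thesis using arbD(2)[OF arb] by auto
qed

lemma no_arc_to_root:
  assumes arb: "arborescence V E r" and e: "(x, r) \<in> E"
  shows False
proof -
  have "x \<in> V" using e arbD(2)[OF arb] by auto
  then obtain P where P: "dipath E P" "hd P = r" "last P = x" using root_path_exists[OF arb] by blast
  show False using no_dcycle[OF arb P(1)] P e by simp
qed

lemma indeg1:
  assumes arb: "arborescence V E r" and e: "(x, v) \<in> E" "(x', v) \<in> E"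
  shows "x = x'"
proof -
  have V: "x \<in> V" "x' \<in> V" using e arbD(2)[OF arb] by auto
  obtain P where P: "dipath E P" "hd P = r" "last P = x" using root_path_exists[OF arb V(1)] by blast
  obtain P' where P': "dipath E P'" "hd P' = r" "last P' = x'" using root_path_exists[OF arb V(2)] by blast
  have nin: "v \<notin> set Q" if Q: "dipath E Q" "last Q = y" "(y, v) \<in> E" for Q y
  proof
    assume "v \<in> set Q"
    then obtain A B where AB: "Q = A @ v # B" by (meson split_list)
    have "dipath E (v # B)" using Q(1) AB dipath_suffix[of E A "v # B"] by simp
    moreover have "last (v # B) = y" using Q(2) AB by simp
    ultimately show False using no_dcycle[OF arb, of "v # B"] Q(3) by simp
  qed
  have "v \<notin> set P" "v \<notin> set P'" using nin P P' e by blast+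
  then have "dipath E (P @ [v])" "dipath E (P' @ [v])" using P P' e
    by (auto simp: dipath_conv successively_append_iff)
  moreover have "hd (P @ [v]) = r" "hd (P' @ [v]) = r" using P P' by (auto simp: dipath_def)
  ultimately have "P @ [v] = P' @ [v]" by (intro root_path_unique[OF arb]) auto
  then show ?thesis using P P' by simp
qed

lemma suffix_root:
  assumes arb: "arborescence V E r"
  shows "dipath E vs \<Longrightarrow> dipath E P \<Longrightarrow> hd P = r \<Longrightarrow> last vs = last P \<Longrightarrow> \<exists>ys. P = ys @ vs"
proof (induction vs)
  case Nil then show ?case by (simp add: dipath_def)
next
  case (Cons a ws)
  show ?case
  proof (cases "ws = []")
    case True
    then have "P = butlast P @ [a]" using Cons.prems(2,4) by (simp add: dipath_def)
    then show ?thesis using True by blast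
  next
    case False
    have dws: "dipath E ws" using Cons.prems(1) False dipath_suffix[of E "[a]" ws] by simp
    obtain ys where ys: "P = ys @ ws" using Cons.IH[OF dws Cons.prems(2,3)] Cons.prems(4) False by auto
    have ea: "(a, hd ws) \<in> E" using Cons.prems(1) False by (auto simp: dipath_conv successively_Cons)
    show ?thesis
    proof (cases "ys = []")
      case True
      then have "hd ws = r" using ys Cons.prems(3) by simp
      then show ?thesis using no_arc_to_root[OF arb, of a] ea by simp
    next
      case nys: False
      have "(last ys, hd ws) \<in> E" using Cons.prems(2) ys nys False
        by (auto simp: dipath_conv successively_append_iff)
      then have "last ys = a" using indeg1[OF arb] ea by blast
      then have "P = butlast ys @ a # ws" using ys nys by (metis append_butlast_last_id append.assoc append_Cons append_Nil)
      then show ?thesis by blast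
    qed
  qed
qed

lemma arcs_drop:
  "(x, y) \<in> path_arcs (drop t Q) \<longleftrightarrow> (\<exists>j. t \<le> j \<and> Suc j < length Q \<and> x = Q ! j \<and> y = Q ! Suc j)"
proof
  assume "(x, y) \<in> path_arcs (drop t Q)"
  then obtain i where i: "i < min (length (drop t Q)) (length (tl (drop t Q)))"
     "(x, y) = (drop t Q ! i, tl (drop t Q) ! i)"
    unfolding path_arcs_def set_zip by blast
  then have "i < length (drop t Q)" "i < length (tl (drop t Q))"
     "x = drop t Q ! i" "y = tl (drop t Q) ! i" by auto
  then show "\<exists>j. t \<le> j \<and> Suc j < length Q \<and> x = Q ! j \<and> y = Q ! Suc j"
    by (intro exI[of _ "t + i"]) (auto simp: nth_tl)
next
  assume "\<exists>j. t \<le> j \<and> Suc j < length Q \<and> x = Q ! j \<and> y = Q ! Suc j"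
  then obtain j where j: "t \<le> j" "Suc j < length Q" "x = Q ! j" "y = Q ! Suc j" by blast
  have "(drop t Q ! (j - t), tl (drop t Q) ! (j - t)) \<in> set (zip (drop t Q) (tl (drop t Q)))"
    unfolding set_zip using j by (intro CollectI exI[of _ "j - t"]) auto
  moreover have "drop t Q ! (j - t) = x" "tl (drop t Q) ! (j - t) = y" using j
    by (auto simp: nth_tl Suc_diff_le)
  ultimately show "(x, y) \<in> path_arcs (drop t Q)" unfolding path_arcs_def by simp
qed

lemma char:
  assumes arb: "arborescence V E r"
    and P: "dipath E P" "hd P = r" and Q: "dipath E Q" "hd Q = r"
    and s: "s + 2 \<le> length P" and t: "t + 2 \<le> length Q"
  shows "path_arcs (drop s P) \<subseteq> path_arcs (drop t Q) \<longleftrightarrow> (\<exists>R. Q = P @ R) \<and> t \<le> s"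
proof
  assume sub: "path_arcs (drop s P) \<subseteq> path_arcs (drop t Q)"
  have "(P ! (length P - 2), P ! Suc (length P - 2)) \<in> path_arcs (drop s P)"
    unfolding arcs_drop using s by (intro exI[of _ "length P - 2"]) auto
  with sub have "(P ! (length P - 2), P ! Suc (length P - 2)) \<in> path_arcs (drop t Q)" by blast
  then obtain j where j: "t \<le> j" "Suc j < length Q" "P ! (length P - 2) = Q ! j"
     "P ! Suc (length P - 2) = Q ! Suc j" unfolding arcs_drop by blast
  have "last P = P ! (length P - 1)" using s by (intro last_conv_nth) auto
  then have lP: "last P = Q ! Suc j" using j(4) s by (simp add: Suc_diff_Suc numeral_2_eq_2)
  have "Q \<noteq> []" using Q(1) by (simp add: dipath_def)
  have dq: "dipath E (take (Suc (Suc j)) Q)"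
    using dipath_prefix[of E "take (Suc (Suc j)) Q" "drop (Suc (Suc j)) Q"] Q(1) \<open>Q \<noteq> []\<close> by simp
  have "hd (take (Suc (Suc j)) Q) = r" using Q(2) j by simp
  moreover have "last (take (Suc (Suc j)) Q) = Q ! Suc j" using j
    by (simp add: take_Suc_conv_app_nth)
  ultimately have "P = take (Suc (Suc j)) Q" using root_path_unique[OF arb P dq] lP by simp
  then have QR: "Q = P @ drop (Suc (Suc j)) Q" by simp
  have "(P ! s, P ! Suc s) \<in> path_arcs (drop s P)"
    unfolding arcs_drop using s by auto
  with sub have "(P ! s, P ! Suc s) \<in> path_arcs (drop t Q)" by blast
  then obtain i where i: "t \<le> i" "Suc i < length Q" "P ! s = Q ! i" unfolding arcs_drop by blast
  have sP: "s < length P" using s by simp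
  have "Q ! s = P ! s" using sP by (subst QR) (simp add: nth_append)
  then have "P ! s = Q ! s" by simp
  then have "Q ! s = Q ! i" using i by simp
  moreover have "s < length Q" using sP by (subst QR) simp
  ultimately have "s = i" using Q(1) i(2) by (simp add: dipath_def nth_eq_iff_index_eq)
  then show "(\<exists>R. Q = P @ R) \<and> t \<le> s" using QR i by blast
next
  assume "(\<exists>R. Q = P @ R) \<and> t \<le> s"
  then obtain R where R: "Q = P @ R" and ts: "t \<le> s" by blast
  show "path_arcs (drop s P) \<subseteq> path_arcs (drop t Q)"
  proof
    fix a assume "a \<in> path_arcs (drop s P)"
    then obtain x y where a: "a = (x, y)" "(x, y) \<in> path_arcs (drop s P)" by (cases a) auto
    then obtain j where "s \<le> j" "Suc j < length P" "x = P ! j" "y = P ! Suc j" unfolding arcs_drop by blast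
    then show "a \<in> path_arcs (drop t Q)" unfolding a arcs_drop R using ts
      by (intro exI[of _ j]) (auto simp: nth_append)
  qed
qed



lemma linord_key:
  fixes k :: "'b \<Rightarrow> 'c::linorder"
  assumes "inj_on k X"
  shows "linear_order_on X {(p,q). p\<in>X \<and> q\<in>X \<and> k p \<le> k q}"
  using assms unfolding linear_order_on_def partial_order_on_def preorder_on_def refl_on_def
    trans_def antisym_def total_on_def inj_on_def
  by (auto intro: order_trans simp: linorder_linear)

lemma prefix_lex:
  fixes xs ys :: "int list"
  shows "xs < ys \<Longrightarrow> map uminus xs < map uminus ys \<Longrightarrow> \<exists>R. ys = xs @ R"
proof (induction xs arbitrary: ys)
  case Nil then show ?case by auto
next
  case (Cons a xs)
  then obtain b ys' where ys: "ys = b # ys'" by (cases ys) auto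
  with Cons show ?case by auto
qed

lemma lex_append: "(xs::'c::linorder list) \<le> xs @ R"
  by (induction xs) auto

lemma lex_append_less: "R \<noteq> [] \<Longrightarrow> (xs::'c::linorder list) < xs @ R"
  by (induction xs) (auto simp: neq_Nil_conv)

lemma dim3:
  fixes X :: "'b set set" and \<rho> :: "'b set \<Rightarrow> int list" and s :: "'b set \<Rightarrow> nat"
  assumes char: "\<And>p q. p\<in>X \<Longrightarrow> q\<in>X \<Longrightarrow> (p \<subseteq> q \<longleftrightarrow> (\<exists>R. \<rho> q = \<rho> p @ R) \<and> s q \<le> s p)"
  shows "\<exists>L. realizer X (inclusion_order X) 3 L"
proof -
  define k1 where "k1 p = (\<rho> p, - int (s p))" for p
  define k2 where "k2 p = (map uminus (\<rho> p), - int (s p))" for p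
  define k3 where "k3 p = (- int (s p), \<rho> p)" for p
  define L where "L i = (if i = 0 then {(p,q). p\<in>X \<and> q\<in>X \<and> k1 p \<le> k1 q}
     else if i = 1 then {(p,q). p\<in>X \<and> q\<in>X \<and> k2 p \<le> k2 q}
     else {(p,q). p\<in>X \<and> q\<in>X \<and> k3 p \<le> k3 q})" for i :: nat
  have eq: "p = q" if "p \<in> X" "q \<in> X" "\<rho> p = \<rho> q" "s p = s q" for p q
    using char[OF that(1,2)] char[OF that(2,1)] that by auto
  have i1: "inj_on k1 X" unfolding inj_on_def k1_def using eq by auto
  have i2: "inj_on k2 X" unfolding inj_on_def k2_def using eq
    by (auto simp: inj_map_eq_map[of uminus] inj_def)
  have i3: "inj_on k3 X" unfolding inj_on_def k3_def using eq by auto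
  have lin: "\<forall>i<3. linear_order_on X (L i)"
  proof (intro allI impI)
    fix i :: nat assume "i < 3"
    then consider "i = 0" | "i = 1" | "i = 2" by linarith
    then show "linear_order_on X (L i)"
      by cases (auto simp: L_def intro: linord_key i1 i2 i3)
  qed
  have "(p, q) \<in> inclusion_order X \<longleftrightarrow> (\<forall>i<3. (p, q) \<in> L i)" if pq: "p \<in> X" "q \<in> X" for p q
  proof
    assume "(p, q) \<in> inclusion_order X"
    then have "p \<subseteq> q" by (simp add: inclusion_order_def)
    then obtain R where R: "\<rho> q = \<rho> p @ R" and st: "s q \<le> s p" using char[OF pq] by auto
    have a: "k1 p \<le> k1 q" 
      using R st lex_append_less[of R "\<rho> p"] by (cases "R = []") (auto simp: k1_def)
    have b: "k2 p \<le> k2 q" 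
      using R st lex_append_less[of "map uminus R" "map uminus (\<rho> p)"] by (cases "R = []") (auto simp: k2_def)
    have c: "k3 p \<le> k3 q" 
      using R st lex_append[of "\<rho> p" R] by (cases "s q = s p") (auto simp: k3_def)
    show "\<forall>i<3. (p, q) \<in> L i"
    proof (intro allI impI)
      fix i :: nat assume "i < 3"
      then consider "i = 0" | "i = 1" | "i = 2" by linarith
      then show "(p, q) \<in> L i" by cases (use a b c pq in \<open>auto simp: L_def\<close>)
    qed
  next
    assume "\<forall>i<3. (p, q) \<in> L i"
    then have a: "k1 p \<le> k1 q" and b: "k2 p \<le> k2 q" and c: "k3 p \<le> k3 q"
      by (auto simp: L_def dest: spec[of _ 0] spec[of _ 1] spec[of _ 2])
    have st: "s q \<le> s p" using c by (auto simp: k3_def)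
    have "\<exists>R. \<rho> q = \<rho> p @ R"
    proof (cases "\<rho> p = \<rho> q")
      case True then show ?thesis by auto
    next
      case False
      have ne: "map uminus (\<rho> p) \<noteq> map uminus (\<rho> q)"
      proof
        assume "map uminus (\<rho> p) = map uminus (\<rho> q)"
        then have "map uminus (map uminus (\<rho> p)) = map uminus (map uminus (\<rho> q))" by simp
        then show False using False by simp
      qed
      have b': "map uminus (\<rho> p) \<le> map uminus (\<rho> q)"
        using b False by (auto simp: k2_def)
      have "\<rho> p < \<rho> q" using a False by (auto simp: k1_def)
      moreover have "map uminus (\<rho> p) < map uminus (\<rho> q)"
        by (rule le_neq_trans[OF b' ne])
      ultimately show ?thesis using prefix_lex by blast
    qed
    then show "(p, q) \<in> inclusion_order X" using char[OF pq] st pq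
      by (auto simp: inclusion_order_def)
  qed
  then show ?thesis using lin unfolding realizer_def by blast
qed


lemma map_prefix_inj:
  assumes "inj_on g (set P \<union> set Q)"
  shows "(\<exists>R. map g Q = map g P @ R) \<longleftrightarrow> (\<exists>R. Q = P @ R)"
proof
  assume "\<exists>R. map g Q = map g P @ R"
  then obtain R where R: "map g Q = map g P @ R" by blast
  have "map g (take (length P) Q) = take (length P) (map g Q)" by (simp add: take_map)
  also have "\<dots> = map g P" using R by simp
  finally have "map g (take (length P) Q) = map g P" .
  moreover have "inj_on g (set (take (length P) Q) \<union> set P)"
    using assms by (rule inj_on_subset) (auto dest: in_set_takeD)
  ultimately have "take (length P) Q = P" using inj_on_map_eq_map by blast
  then have "Q = P @ drop (length P) Q" by (metis append_take_drop_id)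
  then show "\<exists>R. Q = P @ R" by blast
qed auto

theorem proposition1:
  fixes V :: "'a set" and E :: "('a \<times> 'a) set" and r :: 'a
  assumes "arborescence V E r"
  shows "order_dimension (nonempty_path_arcsets E)
           (inclusion_order (nonempty_path_arcsets E)) \<le> 3"
proof -
  note arb = assms
  define X where "X = nonempty_path_arcsets E"
  obtain f :: "'a \<Rightarrow> nat" and n where f: "f ` V = {i. i < n}" "inj_on f V"
    using finite_imp_inj_to_nat_seg[OF arbD(1)[OF arb]] by blast
  define vsof where "vsof p = (SOME vs. dipath E vs \<and> 2 \<le> length vs \<and> path_arcs vs = p)" for p
  define rp where "rp v = (SOME P. dipath E P \<and> hd P = r \<and> last P = v)" for v
  define PP where "PP p = rp (last (vsof p))" for p
  define s where "s p = length (PP p) - length (vsof p)" for p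
  define \<rho> where "\<rho> p = map (\<lambda>x. int (f x)) (PP p)" for p
  have props: "dipath E (PP p) \<and> hd (PP p) = r \<and> s p + 2 \<le> length (PP p) \<and>
      p = path_arcs (drop (s p) (PP p)) \<and> set (PP p) \<subseteq> V" if p: "p \<in> X" for p
  proof -
    from p have "\<exists>vs. dipath E vs \<and> 2 \<le> length vs \<and> path_arcs vs = p"
      by (auto simp: nonempty_path_arcsets_def X_def)
    then have v: "dipath E (vsof p) \<and> 2 \<le> length (vsof p) \<and> path_arcs (vsof p) = p"
      unfolding vsof_def by (rule someI_ex)
    have "last (vsof p) \<in> V" using last_in_V[OF arb] v by blast
    then have "\<exists>P. dipath E P \<and> hd P = r \<and> last P = last (vsof p)"
      using root_path_exists[OF arb] by blast
    then have P: "dipath E (PP p) \<and> hd (PP p) = r \<and> last (PP p) = last (vsof p)"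
      unfolding PP_def rp_def by (rule someI_ex)
    obtain ys where ys: "PP p = ys @ vsof p"
      using suffix_root[OF arb, of "vsof p" "PP p"] v P by auto
    have sp: "s p = length ys" using ys by (simp add: s_def)
    have "drop (s p) (PP p) = vsof p" using ys sp by simp
    moreover have "set (PP p) \<subseteq> V" using dipath_set_V[OF arb] P arbD(6)[OF arb] by auto
    ultimately show ?thesis using P v ys sp by auto
  qed
  have charX: "p \<subseteq> q \<longleftrightarrow> (\<exists>R. \<rho> q = \<rho> p @ R) \<and> s q \<le> s p" if pq: "p \<in> X" "q \<in> X" for p q
  proof -
    have pp: "dipath E (PP p)" "hd (PP p) = r" "s p + 2 \<le> length (PP p)"
      "p = path_arcs (drop (s p) (PP p))" "set (PP p) \<subseteq> V" using props[OF pq(1)] by auto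
    have qq: "dipath E (PP q)" "hd (PP q) = r" "s q + 2 \<le> length (PP q)"
      "q = path_arcs (drop (s q) (PP q))" "set (PP q) \<subseteq> V" using props[OF pq(2)] by auto
    have "p \<subseteq> q \<longleftrightarrow> (\<exists>R. PP q = PP p @ R) \<and> s q \<le> s p"
      using char[OF arb pp(1,2) qq(1,2) pp(3) qq(3)] pp(4) qq(4) by simp
    moreover have "inj_on (\<lambda>x. int (f x)) (set (PP p) \<union> set (PP q))"
      using f(2) pp(5) qq(5) by (auto simp: inj_on_def)
    ultimately show ?thesis unfolding \<rho>_def using map_prefix_inj by blast
  qed
  obtain L where "realizer X (inclusion_order X) 3 L" using dim3[of X \<rho> s] charX by blast
  then have "\<exists>L. realizer X (inclusion_order X) 3 L" by blast
  then have "(LEAST k. \<exists>L. realizer X (inclusion_order X) k L) \<le> 3" by (rule Least_le)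
  then show ?thesis unfolding order_dimension_def X_def .
qed

end
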